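(* Let $S$ be a semigroup and $a\in S$ an idempotent with $aSa\subseteq\operatorname{Reg}(S)$; put $P=\{x\in Sa: x\,\mathscr L\,ax\}$ (a regular subsemigroup of $Sa$) and $\phi:P\to aSa$, $x\mapsto ax$. Let $x\in P$, and let $r$ be the number of $\mathscr R^P$-classes contained in $\widehat R^a_x$. Then: (i) the restriction of $\phi$ to $H^P_x$ is a bijection $H^P_x\to H^{aSa}_{ax}$; (ii) $H^P_x$ is a group if and only if $H^{aSa}_{ax}$ is a group, in which case these groups are isomorphic; (iii) if $H^P_x$ is a group, then $\widehat H^a_x$ is a left group of degree $r$ over $H^P_x$; (iv) if $H^P_x$ is a group, then the set of idempotents of $\widehat H^a_x$ is a left zero band of size $r$.
   Context: $\operatorname{Reg}(S)$ is the set of regular elements of $S$. Green's relations $\mathscr K\in\{\mathscr L,\mathscr R,\mathscr H,\mathscr D,\mathscr J\}$ are taken in $S$, in $P$ (written $\mathscr K^P$, classes $K^P_x$) or in the monoid $aSa$ (written $\mathscr K^{aSa}$, classes $K^{aSa}_y$). For each $\mathscr K$, define the relation $\widehat{\mathscr K}^a$ on $P$ by $x\,\widehat{\mathscr K}^a\,y$ iff $(ax,ay)\in\mathscr K^{aSa}$; $\widehat K^a_x$ denotes the $\widehat{\mathscr K}^a$-class of $x$ in $P$. A left zero band is a semigroup $U$ with $uv=u$ for all $u,v\in U$; a left group of degree $r$ over a group $G$ is a semigroup isomorphic to $U\times G$ with $U$ a left zero band of cardinality $r$. *)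

theory Defs
  imports Main "HOL-Library.Equipollence"
begin

text \<open>The semigroup S is the whole type 'a of class semigroup_mult.
  Green's relations are taken relative to a subsemigroup T (the carrier),
  via T^1 x = T^1 y etc.\<close>

definition gL :: "'a::semigroup_mult set \<Rightarrow> 'a \<Rightarrow> 'a \<Rightarrow> bool" where
  "gL T x y \<longleftrightarrow> x \<in> T \<and> y \<in> T \<and>
     (x = y \<or> (\<exists>u\<in>T. x = u * y)) \<and> (y = x \<or> (\<exists>v\<in>T. y = v * x))"

definition gR :: "'a::semigroup_mult set \<Rightarrow> 'a \<Rightarrow> 'a \<Rightarrow> bool" where
  "gR T x y \<longleftrightarrow> x \<in> T \<and> y \<in> T \<and>
     (x = y \<or> (\<exists>u\<in>T. x = y * u)) \<and> (y = x \<or> (\<exists>v\<in>T. y = x * v))"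

definition gH :: "'a::semigroup_mult set \<Rightarrow> 'a \<Rightarrow> 'a \<Rightarrow> bool" where
  "gH T x y \<longleftrightarrow> gL T x y \<and> gR T x y"

definition gclass :: "('a set \<Rightarrow> 'a \<Rightarrow> 'a \<Rightarrow> bool) \<Rightarrow> 'a set \<Rightarrow> 'a \<Rightarrow> 'a set" where
  "gclass K T x = {y. K T x y}"

definition Reg :: "'a::semigroup_mult set" where
  "Reg = {x. \<exists>y. x * y * x = x}"

definition aSa :: "'a::semigroup_mult \<Rightarrow> 'a set" where
  "aSa a = {a * s * a | s. True}"

definition Sa :: "'a::semigroup_mult \<Rightarrow> 'a set" where
  "Sa a = {s * a | s. True}"

definition Pset :: "'a::semigroup_mult \<Rightarrow> 'a set" where
  "Pset a = {x \<in> Sa a. gL UNIV x (a * x)}"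

definition hatclass :: "('a::semigroup_mult set \<Rightarrow> 'a \<Rightarrow> 'a \<Rightarrow> bool) \<Rightarrow> 'a \<Rightarrow> 'a \<Rightarrow> 'a set" where
  "hatclass K a x = {y \<in> Pset a. K (aSa a) (a * x) (a * y)}"

definition is_group :: "'a::semigroup_mult set \<Rightarrow> bool" where
  "is_group G \<longleftrightarrow> G \<noteq> {} \<and> (\<forall>x\<in>G. \<forall>y\<in>G. x * y \<in> G) \<and>
     (\<exists>e\<in>G. \<forall>x\<in>G. e * x = x \<and> x * e = x \<and> (\<exists>y\<in>G. x * y = e \<and> y * x = e))"

definition sg_iso :: "'a::semigroup_mult set \<Rightarrow> 'a set \<Rightarrow> bool" where
  "sg_iso G K \<longleftrightarrow> (\<exists>f. bij_betw f G K \<and> (\<forall>x\<in>G. \<forall>y\<in>G. f (x * y) = f x * f y))"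

text \<open>T (a subsemigroup) is isomorphic to U \<times> G, U a left zero band, G a group.\<close>
definition left_group_over :: "'a::semigroup_mult set \<Rightarrow> 'b set \<Rightarrow> 'a set \<Rightarrow> bool" where
  "left_group_over T U G \<longleftrightarrow> is_group G \<and> (\<forall>x\<in>T. \<forall>y\<in>T. x * y \<in> T) \<and>
     (\<exists>f. bij_betw f T (U \<times> G) \<and>
        (\<forall>x\<in>T. \<forall>y\<in>T. f (x * y) = (fst (f x), snd (f x) * snd (f y))))"

definition left_zero_band :: "'a::semigroup_mult set \<Rightarrow> bool" where
  "left_zero_band U \<longleftrightarrow> (\<forall>u\<in>U. \<forall>v\<in>U. u * v = u)"

end

theory Submission
  imports Defs
begin

lemma grp_unit: "is_group G \<Longrightarrow> \<exists>e\<in>G. e * e = e \<and> (\<forall>x\<in>G. e * x = x \<and> x * e = x \<and> (\<exists>y\<in>G. x * y = e \<and> y * x = e))"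
  unfolding is_group_def by blast

lemma grp_closed: "is_group G \<Longrightarrow> x \<in> G \<Longrightarrow> y \<in> G \<Longrightarrow> x * y \<in> G"
  unfolding is_group_def by blast

lemma grp_rinv: "is_group (G::'b::semigroup_mult set) \<Longrightarrow> g \<in> G \<Longrightarrow> h \<in> G \<Longrightarrow> \<exists>v\<in>G. g = (g * h) * v"
proof -
  assume G: "is_group G" and g: "g \<in> G" and h: "h \<in> G"
  obtain e where e: "e \<in> G" "\<forall>x\<in>G. e * x = x \<and> x * e = x \<and> (\<exists>y\<in>G. x * y = e \<and> y * x = e)"
    using grp_unit[OF G] by blast
  obtain h' where h': "h' \<in> G" "h * h' = e" using e(2) h by blast
  have "(g * h) * h' = g * e" using h'(2) by (simp add: mult.assoc)
  also have "\<dots> = g" using e(2) g by blast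
  finally show ?thesis using h'(1) by metis
qed

lemma group_to:
  fixes f :: "'b::semigroup_mult \<Rightarrow> 'c::semigroup_mult"
  assumes bij: "bij_betw f A B" and hom: "\<And>x y. x \<in> A \<Longrightarrow> y \<in> A \<Longrightarrow> f (x * y) = f x * f y"
    and GA: "is_group A"
  shows "is_group B"
proof -
  have B: "B = f ` A" using bij unfolding bij_betw_def by simp
  obtain e where e: "e \<in> A" "\<forall>x\<in>A. e * x = x \<and> x * e = x \<and> (\<exists>y\<in>A. x * y = e \<and> y * x = e)"
    using GA unfolding is_group_def by blast
  have "B \<noteq> {}" using B e(1) by blast
  moreover have "\<forall>x\<in>B. \<forall>y\<in>B. x * y \<in> B"
  proof (intro ballI)
    fix x y assume "x \<in> B" "y \<in> B"
    then obtain p q where "p \<in> A" "q \<in> A" "x = f p" "y = f q" using B by blast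
    then show "x * y \<in> B" using hom grp_closed[OF GA] B by (metis imageI)
  qed
  moreover have "\<forall>x\<in>B. f e * x = x \<and> x * f e = x \<and> (\<exists>y\<in>B. x * y = f e \<and> y * x = f e)"
  proof
    fix x assume "x \<in> B"
    then obtain p where p: "p \<in> A" "x = f p" using B by blast
    then obtain q where q: "q \<in> A" "p * q = e" "q * p = e" using e(2) by blast
    have "f e * x = x" using hom[OF e(1) p(1)] e(2) p by simp
    moreover have "x * f e = x" using hom[OF p(1) e(1)] e(2) p by simp
    moreover have "x * f q = f e" "f q * x = f e" using hom[OF p(1) q(1)] hom[OF q(1) p(1)] q p by simp_all
    ultimately show "f e * x = x \<and> x * f e = x \<and> (\<exists>y\<in>B. x * y = f e \<and> y * x = f e)"
      using B q(1) by blast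
  qed
  ultimately show ?thesis unfolding is_group_def using B e(1) by blast
qed

lemma group_from:
  fixes f :: "'b::semigroup_mult \<Rightarrow> 'c::semigroup_mult"
  assumes bij: "bij_betw f A B" and hom: "\<And>x y. x \<in> A \<Longrightarrow> y \<in> A \<Longrightarrow> f (x * y) = f x * f y"
    and cl: "\<And>x y. x \<in> A \<Longrightarrow> y \<in> A \<Longrightarrow> x * y \<in> A"
    and GB: "is_group B"
  shows "is_group A"
proof -
  have B: "B = f ` A" and inj: "inj_on f A" using bij unfolding bij_betw_def by simp_all
  obtain e' where e': "e' \<in> B" "\<forall>x\<in>B. e' * x = x \<and> x * e' = x \<and> (\<exists>y\<in>B. x * y = e' \<and> y * x = e')"
    using GB unfolding is_group_def by blast
  obtain e where e: "e \<in> A" "f e = e'" using B e'(1) by blast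
  have "A \<noteq> {}" using e(1) by blast
  moreover have "\<forall>x\<in>A. e * x = x \<and> x * e = x \<and> (\<exists>y\<in>A. x * y = e \<and> y * x = e)"
  proof
    fix x assume x: "x \<in> A"
    have fx: "f x \<in> B" using B x by blast
    have "f (e * x) = f x" using hom[OF e(1) x] e(2) e'(2) fx by simp
    then have 1: "e * x = x" using inj cl[OF e(1) x] x unfolding inj_on_def by blast
    have "f (x * e) = f x" using hom[OF x e(1)] e(2) e'(2) fx by simp
    then have 2: "x * e = x" using inj cl[OF x e(1)] x unfolding inj_on_def by blast
    obtain b where b: "b \<in> B" "f x * b = e'" "b * f x = e'" using e'(2) fx by blast
    obtain y where y: "y \<in> A" "b = f y" using B b(1) by blast
    have "f (x * y) = f e" using hom[OF x y(1)] y b e by simp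
    then have 3: "x * y = e" using inj cl[OF x y(1)] e(1) unfolding inj_on_def by blast
    have "f (y * x) = f e" using hom[OF y(1) x] y b e by simp
    then have 4: "y * x = e" using inj cl[OF y(1) x] e(1) unfolding inj_on_def by blast
    show "e * x = x \<and> x * e = x \<and> (\<exists>y\<in>A. x * y = e \<and> y * x = e)" using 1 2 3 4 y(1) by blast
  qed
  ultimately show ?thesis unfolding is_group_def using cl e(1) by blast
qed

locale ctx =
  fixes a :: "'a::semigroup_mult"
  assumes idem: "a * a = a" and reg: "aSa a \<subseteq> Reg"
begin

lemma aa1[simp]: "a * (a * z) = a * z"
  by (simp add: idem mult.assoc[symmetric])

lemma Sa_iff: "x \<in> Sa a \<longleftrightarrow> x * a = x"
proof
  assume "x \<in> Sa a" then obtain s where "x = s * a" unfolding Sa_def by blast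
  then show "x * a = x" by (simp add: mult.assoc idem)
next
  assume "x * a = x" then show "x \<in> Sa a" unfolding Sa_def by (metis (mono_tags, lifting) mem_Collect_eq)
qed

lemma M_iff: "y \<in> aSa a \<longleftrightarrow> a * y * a = y"
proof
  assume "y \<in> aSa a" then obtain s where "y = a * s * a" unfolding aSa_def by blast
  then show "a * y * a = y" by (simp add: mult.assoc idem)
next
  assume "a * y * a = y" then show "y \<in> aSa a" unfolding aSa_def by (metis (mono_tags, lifting) mem_Collect_eq)
qed

lemma P_iff: "x \<in> Pset a \<longleftrightarrow> x * a = x \<and> (\<exists>t. x = t * (a * x))"
proof
  assume "x \<in> Pset a"
  then have 1: "x * a = x" and 2: "x = a * x \<or> (\<exists>u\<in>UNIV. x = u * (a * x))"
    unfolding Pset_def gL_def Sa_iff by auto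
  from 2 have "\<exists>t. x = t * (a * x)"
  proof
    assume "x = a * x" then have "x = a * (a * x)" by simp
    then show ?thesis by blast
  qed blast
  with 1 show "x * a = x \<and> (\<exists>t. x = t * (a * x))" by blast
next
  assume h: "x * a = x \<and> (\<exists>t. x = t * (a * x))"
  then show "x \<in> Pset a" unfolding Pset_def gL_def Sa_iff by blast
qed

lemma M_right: "y \<in> aSa a \<Longrightarrow> y * a = y"
proof -
  assume "y \<in> aSa a" then have h: "a * y * a = y" unfolding M_iff .
  have "y * a = (a * y * a) * a" using h by simp
  also have "\<dots> = a * y * a" by (simp add: mult.assoc idem)
  finally show ?thesis using h by simp
qed
lemma M_left: "y \<in> aSa a \<Longrightarrow> a * y = y"
proof -
  assume "y \<in> aSa a" then have h: "a * y * a = y" unfolding M_iff .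
  have "a * y = a * (a * y * a)" using h by simp
  also have "\<dots> = a * y * a" by (simp add: mult.assoc)
  finally show ?thesis using h by simp
qed
lemma P_right: "x \<in> Pset a \<Longrightarrow> x * a = x"
  using P_iff by blast

lemma M_sub_P: "y \<in> aSa a \<Longrightarrow> y \<in> Pset a"
proof -
  assume y: "y \<in> aSa a"
  have "y = a * (a * y)" using M_left[OF y] by simp
  then show ?thesis unfolding P_iff using M_right[OF y] by blast
qed

lemma a_M: "a \<in> aSa a" unfolding M_iff by (simp add: idem)
lemma a_P: "a \<in> Pset a" using M_sub_P a_M by blast

lemma aP_M: "x \<in> Pset a \<Longrightarrow> a * x \<in> aSa a"
  unfolding M_iff by (simp add: mult.assoc P_right)

lemma M_mult: "y \<in> aSa a \<Longrightarrow> z \<in> aSa a \<Longrightarrow> y * z \<in> aSa a"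
proof -
  assume y: "y \<in> aSa a" and z: "z \<in> aSa a"
  have "a * (y * z) * a = (a * y) * (z * a)" by (simp add: mult.assoc)
  then show ?thesis unfolding M_iff using M_left[OF y] M_right[OF z] by simp
qed

lemma P_mult: "x \<in> Pset a \<Longrightarrow> y \<in> Pset a \<Longrightarrow> x * y \<in> Pset a"
proof -
  assume x: "x \<in> Pset a" and y: "y \<in> Pset a"
  obtain t where t: "x = t * (a * x)" using x P_iff by blast
  have "x * y * a = x * y" using P_right[OF y] by (simp add: mult.assoc)
  moreover have "x * y = t * (a * (x * y))" using t by (metis mult.assoc)
  ultimately show ?thesis unfolding P_iff by blast
qed

lemma hom: "x \<in> Pset a \<Longrightarrow> a * (x * y) = (a * x) * (a * y)"
proof -
  assume x: "x \<in> Pset a"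
  have "(a * x) * (a * y) = a * (x * a) * y" by (simp add: mult.assoc)
  then show ?thesis using P_right[OF x] by (simp add: mult.assoc)
qed

lemma M_reg: "b \<in> aSa a \<Longrightarrow> \<exists>w\<in>aSa a. b * w * b = b"
proof -
  assume b: "b \<in> aSa a"
  then obtain y where y: "b * y * b = b" using reg unfolding Reg_def by blast
  have "b * (a * y * a) * b = (b * a) * y * (a * b)" by (simp add: mult.assoc)
  also have "\<dots> = b" using y M_left[OF b] M_right[OF b] by simp
  finally have "b * (a * y * a) * b = b" .
  moreover have "a * y * a \<in> aSa a" unfolding aSa_def by blast
  ultimately show ?thesis by blast
qed

lemma P_t: "x \<in> Pset a \<Longrightarrow> \<exists>t. x = t * (a * x)"
  using P_iff by blast

lemma P_fac: "x \<in> Pset a \<Longrightarrow> \<exists>w\<in>aSa a. x = x * w * (a * x)"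
proof -
  assume x: "x \<in> Pset a"
  obtain w where w: "w \<in> aSa a" "a * x * w * (a * x) = a * x"
    using M_reg[OF aP_M[OF x]] by blast
  obtain t where t: "x = t * (a * x)" using P_t[OF x] by blast
  have "x = t * (a * x * w * (a * x))" using t w(2) by simp
  also have "\<dots> = (t * (a * x)) * w * (a * x)" by (simp add: mult.assoc)
  also have "\<dots> = x * w * (a * x)" using t by simp
  finally show ?thesis using w(1) by blast
qed

lemma P_left: "x \<in> Pset a \<Longrightarrow> \<exists>p\<in>Pset a. x = p * x"
proof -
  assume x: "x \<in> Pset a"
  obtain w where w: "w \<in> aSa a" "x = x * w * (a * x)" using P_fac[OF x] by blast
  have "x * w * a \<in> Pset a" using P_mult x M_sub_P[OF w(1)] a_P by blast
  moreover have "x = (x * w * a) * x" using w(2) by (simp add: mult.assoc)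
  ultimately show ?thesis by blast
qed

lemma disjR_P: "y \<in> Pset a \<Longrightarrow> (x = y \<or> (\<exists>u\<in>Pset a. x = y * u)) \<longleftrightarrow> (\<exists>u\<in>Pset a. x = y * u)"
  using P_right[of y] a_P by (auto intro: bexI[of _ a])
lemma disjL_P: "y \<in> Pset a \<Longrightarrow> (x = y \<or> (\<exists>u\<in>Pset a. x = u * y)) \<longleftrightarrow> (\<exists>u\<in>Pset a. x = u * y)"
  using P_left[of y] by auto
lemma disjR_M: "y \<in> aSa a \<Longrightarrow> (x = y \<or> (\<exists>u\<in>aSa a. x = y * u)) \<longleftrightarrow> (\<exists>u\<in>aSa a. x = y * u)"
  using M_right[of y] a_M by (auto intro: bexI[of _ a])
lemma disjL_M: "y \<in> aSa a \<Longrightarrow> (x = y \<or> (\<exists>u\<in>aSa a. x = u * y)) \<longleftrightarrow> (\<exists>u\<in>aSa a. x = u * y)"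
  using M_left[of y] a_M by (auto intro: bexI[of _ a])

lemma gR_P: "gR (Pset a) x y \<longleftrightarrow> x \<in> Pset a \<and> y \<in> Pset a \<and> (\<exists>u\<in>Pset a. x = y * u) \<and> (\<exists>v\<in>Pset a. y = x * v)"
  unfolding gR_def using disjR_P[of y x] disjR_P[of x y] by blast
lemma gL_P: "gL (Pset a) x y \<longleftrightarrow> x \<in> Pset a \<and> y \<in> Pset a \<and> (\<exists>u\<in>Pset a. x = u * y) \<and> (\<exists>v\<in>Pset a. y = v * x)"
  unfolding gL_def using disjL_P[of y x] disjL_P[of x y] by blast
lemma gR_M: "gR (aSa a) x y \<longleftrightarrow> x \<in> aSa a \<and> y \<in> aSa a \<and> (\<exists>u\<in>aSa a. x = y * u) \<and> (\<exists>v\<in>aSa a. y = x * v)"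
  unfolding gR_def using disjR_M[of y x] disjR_M[of x y] by blast
lemma gL_M: "gL (aSa a) x y \<longleftrightarrow> x \<in> aSa a \<and> y \<in> aSa a \<and> (\<exists>u\<in>aSa a. x = u * y) \<and> (\<exists>v\<in>aSa a. y = v * x)"
  unfolding gL_def using disjL_M[of y x] disjL_M[of x y] by blast

lemma mu: "a * u * a \<in> aSa a" unfolding aSa_def by blast

lemma L_fw: "p = u * q \<Longrightarrow> u \<in> Pset a \<Longrightarrow> a * p = (a * u * a) * (a * q)"
proof -
  assume p: "p = u * q" and u: "u \<in> Pset a"
  have "(a * u * a) * (a * q) = a * (u * a) * q" by (simp add: mult.assoc)
  then show ?thesis using p P_right[OF u] by (simp add: mult.assoc)
qed

lemma L_bw: "p1 \<in> Pset a \<Longrightarrow> m \<in> aSa a \<Longrightarrow> a * p1 = m * (a * q) \<Longrightarrow> \<exists>p\<in>Pset a. p1 = p * q"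
proof -
  assume p1: "p1 \<in> Pset a" and m: "m \<in> aSa a" and e: "a * p1 = m * (a * q)"
  obtain w where w: "w \<in> aSa a" "p1 = p1 * w * (a * p1)" using P_fac[OF p1] by blast
  have "p1 = p1 * w * (m * (a * q))" using w(2) e by simp
  then have "p1 = (p1 * w * m * a) * q" by (simp add: mult.assoc)
  moreover have "p1 * w * m * a \<in> Pset a"
    using P_mult p1 M_sub_P w(1) m a_P by blast
  ultimately show ?thesis by blast
qed

lemma L_char: "x \<in> Pset a \<Longrightarrow> y \<in> Pset a \<Longrightarrow> gL (Pset a) x y \<longleftrightarrow> gL (aSa a) (a * x) (a * y)"
proof -
  assume x: "x \<in> Pset a" and y: "y \<in> Pset a"
  show ?thesis
  proof
    assume "gL (Pset a) x y"
    then obtain u v where "u \<in> Pset a" "x = u * y" "v \<in> Pset a" "y = v * x" unfolding gL_P by blast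
    then have "a * x = (a * u * a) * (a * y)" "a * y = (a * v * a) * (a * x)" using L_fw by blast+
    then show "gL (aSa a) (a * x) (a * y)"
      unfolding gL_M using mu aP_M x y by blast
  next
    assume "gL (aSa a) (a * x) (a * y)"
    then obtain u v where "u \<in> aSa a" "a * x = u * (a * y)" "v \<in> aSa a" "a * y = v * (a * x)" unfolding gL_M by blast
    then show "gL (Pset a) x y"
      unfolding gL_P using L_bw x y by blast
  qed
qed

lemma R_fw: "p = q * u \<Longrightarrow> u \<in> Pset a \<Longrightarrow> q \<in> Pset a \<Longrightarrow> a * p = (a * q) * (a * u * a)"
proof -
  assume p: "p = q * u" and u: "u \<in> Pset a" and q: "q \<in> Pset a"
  have "(a * q) * (a * u * a) = a * (q * a) * (u * a)" by (simp add: mult.assoc)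
  then show ?thesis using p P_right[OF u] P_right[OF q] by (simp add: mult.assoc)
qed

lemma R_hat: "gR (Pset a) x y \<Longrightarrow> gR (aSa a) (a * x) (a * y)"
proof -
  assume "gR (Pset a) x y"
  then obtain u v where h: "x \<in> Pset a" "y \<in> Pset a" "u \<in> Pset a" "x = y * u" "v \<in> Pset a" "y = x * v" unfolding gR_P by blast
  then have "a * x = (a * y) * (a * u * a)" "a * y = (a * x) * (a * v * a)" using R_fw by blast+
  then show ?thesis unfolding gR_M using mu aP_M h by blast
qed

lemma gR_sym: "gR T x y \<Longrightarrow> gR T y x" unfolding gR_def by blast
lemma gL_sym: "gL T x y \<Longrightarrow> gL T y x" unfolding gL_def by blast
lemma gH_sym: "gH T x y \<Longrightarrow> gH T y x" unfolding gH_def using gR_sym gL_sym by blast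
lemma chainR: "(\<And>u v. u \<in> (T::'b::semigroup_mult set) \<Longrightarrow> v \<in> T \<Longrightarrow> u * v \<in> T) \<Longrightarrow> (x = y \<or> (\<exists>u\<in>T. x = y * u)) \<Longrightarrow> (y = z \<or> (\<exists>u\<in>T. y = z * u)) \<Longrightarrow> (x = z \<or> (\<exists>u\<in>T. x = z * u))"
proof -
  assume c: "\<And>u v. u \<in> T \<Longrightarrow> v \<in> T \<Longrightarrow> u * v \<in> T" and h1: "x = y \<or> (\<exists>u\<in>T. x = y * u)" and h2: "y = z \<or> (\<exists>u\<in>T. y = z * u)"
  show ?thesis
  proof (cases "x = y")
    case True then show ?thesis using h2 by blast
  next
    case False
    then obtain u where u: "u \<in> T" "x = y * u" using h1 by blast
    show ?thesis
    proof (cases "y = z")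
      case True then show ?thesis using u by blast
    next
      case False
      then obtain w where w: "w \<in> T" "y = z * w" using h2 by blast
      have "x = z * (w * u)" using u w by (simp add: mult.assoc)
      then show ?thesis using c[OF w(1) u(1)] by blast
    qed
  qed
qed
lemma chainL: "(\<And>u v. u \<in> (T::'b::semigroup_mult set) \<Longrightarrow> v \<in> T \<Longrightarrow> u * v \<in> T) \<Longrightarrow> (x = y \<or> (\<exists>u\<in>T. x = u * y)) \<Longrightarrow> (y = z \<or> (\<exists>u\<in>T. y = u * z)) \<Longrightarrow> (x = z \<or> (\<exists>u\<in>T. x = u * z))"
proof -
  assume c: "\<And>u v. u \<in> T \<Longrightarrow> v \<in> T \<Longrightarrow> u * v \<in> T" and h1: "x = y \<or> (\<exists>u\<in>T. x = u * y)" and h2: "y = z \<or> (\<exists>u\<in>T. y = u * z)"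
  show ?thesis
  proof (cases "x = y")
    case True then show ?thesis using h2 by blast
  next
    case False
    then obtain u where u: "u \<in> T" "x = u * y" using h1 by blast
    show ?thesis
    proof (cases "y = z")
      case True then show ?thesis using u by blast
    next
      case False
      then obtain w where w: "w \<in> T" "y = w * z" using h2 by blast
      have "x = (u * w) * z" using u w by (simp add: mult.assoc)
      then show ?thesis using c[OF u(1) w(1)] by blast
    qed
  qed
qed
lemma gR_trans: "(\<And>u v. u \<in> T \<Longrightarrow> v \<in> T \<Longrightarrow> u * v \<in> T) \<Longrightarrow> gR T x y \<Longrightarrow> gR T y z \<Longrightarrow> gR T x z"
  unfolding gR_def using chainR[of T x y z] chainR[of T z y x] by blast
lemma gL_trans: "(\<And>u v. u \<in> T \<Longrightarrow> v \<in> T \<Longrightarrow> u * v \<in> T) \<Longrightarrow> gL T x y \<Longrightarrow> gL T y z \<Longrightarrow> gL T x z"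
  unfolding gL_def using chainL[of T x y z] chainL[of T z y x] by blast
lemma gH_trans: "(\<And>u v. u \<in> T \<Longrightarrow> v \<in> T \<Longrightarrow> u * v \<in> T) \<Longrightarrow> gH T x y \<Longrightarrow> gH T y z \<Longrightarrow> gH T x z"
  unfolding gH_def using gR_trans gL_trans by blast
lemma gR_refl: "x \<in> T \<Longrightarrow> gR T x x" unfolding gR_def by simp

lemma gR_Pt: "gR (Pset a) x y \<Longrightarrow> gR (Pset a) y z \<Longrightarrow> gR (Pset a) x z"
  using gR_trans[OF P_mult] by blast
lemma gR_Mt: "gR (aSa a) x y \<Longrightarrow> gR (aSa a) y z \<Longrightarrow> gR (aSa a) x z"
  using gR_trans[OF M_mult] by blast
lemma gL_Mt: "gL (aSa a) x y \<Longrightarrow> gL (aSa a) y z \<Longrightarrow> gL (aSa a) x z"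
  using gL_trans[OF M_mult] by blast
lemma gH_Mt: "gH (aSa a) x y \<Longrightarrow> gH (aSa a) y z \<Longrightarrow> gH (aSa a) x z"
  using gH_trans[OF M_mult] by blast

lemma Lift:
  assumes y: "y \<in> Pset a" and u: "u \<in> aSa a" and v: "v \<in> aSa a" and e: "a * y = (a * y * u) * v"
  shows "y * u \<in> Pset a \<and> gR (Pset a) (y * u) y \<and> a * (y * u) = a * y * u"
proof -
  have yu: "y * u \<in> Pset a" using P_mult y M_sub_P u by blast
  obtain t where t: "y = t * (a * y)" using P_t[OF y] by blast
  have "y * u * v = t * (a * y) * u * v" using t by simp
  also have "\<dots> = t * (a * y * u * v)" by (simp add: mult.assoc)
  also have "\<dots> = y" using e t by simp
  finally have "y = (y * u) * v" by simp
  then have "gR (Pset a) (y * u) y" unfolding gR_P using yu y M_sub_P u v by blast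
  then show ?thesis using yu by (simp add: mult.assoc)
qed

lemma Inj: "y \<in> Pset a \<Longrightarrow> z = y * v \<Longrightarrow> a * y = a * z \<Longrightarrow> y = z"
proof -
  assume y: "y \<in> Pset a" and z: "z = y * v" and e: "a * y = a * z"
  obtain t where t: "y = t * (a * y)" using P_t[OF y] by blast
  have "t * (a * z) = t * (a * y) * v" using z by (simp add: mult.assoc)
  also have "\<dots> = z" using t z by simp
  finally show "y = z" using t e by simp
qed

end

locale ctx2 = ctx +
  fixes x assumes xP: "x \<in> Pset a"
begin

abbreviation "H0 \<equiv> gclass gH (Pset a) x"
abbreviation "G \<equiv> gclass gH (aSa a) (a * x)"
abbreviation "hatH \<equiv> hatclass gH a x"
abbreviation "RP \<equiv> {C. (\<exists>y\<in>Pset a. C = gclass gR (Pset a) y) \<and> C \<subseteq> hatclass gR a x}"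

lemma H0_mem: "y \<in> H0 \<longleftrightarrow> y \<in> Pset a \<and> gR (Pset a) x y \<and> gL (Pset a) x y"
  unfolding gclass_def gH_def gR_def by auto

lemma G_mem: "c \<in> G \<longleftrightarrow> gH (aSa a) (a * x) c"
  unfolding gclass_def by simp

lemma G_M: "c \<in> G \<Longrightarrow> c \<in> aSa a"
  unfolding G_mem gH_def gR_def by blast

lemma phi_into: "y \<in> H0 \<Longrightarrow> a * y \<in> G"
  unfolding H0_mem G_mem gH_def using L_char xP R_hat by blast

lemma phi_inj: "inj_on (\<lambda>y. a * y) H0"
proof (rule inj_onI)
  fix y z assume y: "y \<in> H0" and z: "z \<in> H0" and e: "a * y = a * z"
  have "gR (Pset a) y x" using y unfolding H0_mem using gR_sym by blast
  then have "gR (Pset a) y z" using z unfolding H0_mem using gR_Pt by blast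
  then obtain v where "z = y * v" unfolding gR_P by blast
  then show "y = z" using Inj y e unfolding H0_mem by blast
qed

lemma phi_surj: "c \<in> G \<Longrightarrow> \<exists>y\<in>H0. c = a * y"
proof -
  assume c: "c \<in> G"
  then have "gR (aSa a) (a * x) c" "gL (aSa a) (a * x) c" unfolding G_mem gH_def by auto
  then obtain u v where uv: "u \<in> aSa a" "c = a * x * u" "v \<in> aSa a" "a * x = c * v" unfolding gR_M by blast
  have L: "x * u \<in> Pset a \<and> gR (Pset a) (x * u) x \<and> a * (x * u) = a * x * u"
    using Lift[OF xP uv(1) uv(3) uv(4)[unfolded uv(2)]] .
  have "gL (Pset a) x (x * u)" using L_char xP L \<open>gL (aSa a) (a * x) c\<close> uv(2) by simp
  then have "x * u \<in> H0" using L gR_sym unfolding H0_mem by blast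
  moreover have "c = a * (x * u)" using L uv(2) by simp
  ultimately show ?thesis by blast
qed

lemma phi_bij: "bij_betw (\<lambda>y. a * y) H0 G"
  unfolding bij_betw_def using phi_inj phi_into phi_surj by blast

lemma phi_hom: "y \<in> H0 \<Longrightarrow> z \<in> H0 \<Longrightarrow> a * (y * z) = (a * y) * (a * z)"
  using hom unfolding H0_mem by blast

lemma H0_closed: "is_group G \<Longrightarrow> y \<in> H0 \<Longrightarrow> z \<in> H0 \<Longrightarrow> y * z \<in> H0"
proof -
  assume GG: "is_group G" and y: "y \<in> H0" and z: "z \<in> H0"
  have ay: "a * y \<in> G" and az: "a * z \<in> G" using phi_into y z by auto
  obtain v where v: "v \<in> G" "a * y = (a * y * (a * z)) * v" using grp_rinv[OF GG ay az] by blast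
  have yP: "y \<in> Pset a" using y H0_mem by blast
  have L: "y * (a * z) \<in> Pset a \<and> gR (Pset a) (y * (a * z)) y \<and> a * (y * (a * z)) = a * y * (a * z)"
    using Lift[OF yP G_M[OF az] G_M[OF v(1)] v(2)] .
  have "y * (a * z) = (y * a) * z" by (simp add: mult.assoc)
  then have yz: "y * (a * z) = y * z" using P_right[OF yP] by simp
  have "a * y * (a * z) \<in> G" using grp_closed[OF GG ay az] .
  then have "gL (aSa a) (a * x) (a * (y * z))" using L yz unfolding G_mem gH_def by simp
  then have "gL (Pset a) x (y * z)" using L_char xP L yz by simp
  moreover have "gR (Pset a) x (y * z)"
  proof -
    have "gR (Pset a) y (y * z)" using L yz gR_sym by metis
    moreover have "gR (Pset a) x y" using y unfolding H0_mem by blast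
    ultimately show ?thesis using gR_Pt by blast
  qed
  ultimately show ?thesis using L yz unfolding H0_mem by simp
qed

lemma part_ii: "is_group H0 \<longleftrightarrow> is_group G"
proof
  assume "is_group H0" then show "is_group G" using group_to[OF phi_bij phi_hom] by blast
next
  assume g: "is_group G" show "is_group H0"
    by (rule group_from[OF phi_bij phi_hom H0_closed[OF g] g])
qed


abbreviation "psi \<equiv> the_inv_into H0 (\<lambda>y. a * y)"

lemma psi_in: "c \<in> G \<Longrightarrow> psi c \<in> H0"
  using the_inv_into_into[OF phi_inj, of c H0] phi_bij unfolding bij_betw_def by blast

lemma phi_psi: "c \<in> G \<Longrightarrow> a * psi c = c"
  using f_the_inv_into_f[OF phi_inj, of c] phi_bij unfolding bij_betw_def by blast

lemma psi_phi: "y \<in> H0 \<Longrightarrow> psi (a * y) = y"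
  using the_inv_into_f_f[OF phi_inj] by blast

lemma psi_hom: "is_group H0 \<Longrightarrow> g \<in> G \<Longrightarrow> h \<in> G \<Longrightarrow> psi (g * h) = psi g * psi h"
proof -
  assume GH: "is_group H0" and g: "g \<in> G" and h: "h \<in> G"
  have pq: "psi g * psi h \<in> H0" using grp_closed[OF GH psi_in[OF g] psi_in[OF h]] .
  have "a * (psi g * psi h) = g * h" using phi_hom[OF psi_in[OF g] psi_in[OF h]] phi_psi g h by simp
  then show ?thesis using psi_phi[OF pq] by simp
qed

lemma hatH_mem: "y \<in> hatH \<longleftrightarrow> y \<in> Pset a \<and> a * y \<in> G"
  unfolding hatclass_def G_mem by simp

lemma hatR_mem: "y \<in> hatclass gR a x \<longleftrightarrow> y \<in> Pset a \<and> gR (aSa a) (a * x) (a * y)"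
  unfolding hatclass_def by simp

lemma RP_in: "y \<in> Pset a \<Longrightarrow> gR (aSa a) (a * x) (a * y) \<Longrightarrow> gclass gR (Pset a) y \<in> RP"
proof -
  assume y: "y \<in> Pset a" and r: "gR (aSa a) (a * x) (a * y)"
  have "gclass gR (Pset a) y \<subseteq> hatclass gR a x"
  proof
    fix z assume "z \<in> gclass gR (Pset a) y"
    then have z: "gR (Pset a) y z" unfolding gclass_def by simp
    then have "gR (aSa a) (a * y) (a * z)" using R_hat by blast
    then have "gR (aSa a) (a * x) (a * z)" using r gR_Mt by blast
    moreover have "z \<in> Pset a" using z unfolding gR_def by blast
    ultimately show "z \<in> hatclass gR a x" unfolding hatR_mem by blast
  qed
  then show ?thesis using y by blast
qed

lemma G_R: "c \<in> G \<Longrightarrow> gR (aSa a) (a * x) c"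
  unfolding G_mem gH_def by blast

lemma class_eq: "gR (Pset a) y w \<Longrightarrow> gclass gR (Pset a) y = gclass gR (Pset a) w"
proof -
  assume r: "gR (Pset a) y w"
  have r': "gR (Pset a) w y" using gR_sym[OF r] .
  show ?thesis unfolding gclass_def
  proof (intro Collect_cong iffI)
    fix z assume "gR (Pset a) y z" then show "gR (Pset a) w z" using r' gR_Pt by blast
  next
    fix z assume "gR (Pset a) w z" then show "gR (Pset a) y z" using r gR_Pt by blast
  qed
qed

lemma class_self: "w \<in> Pset a \<Longrightarrow> w \<in> gclass gR (Pset a) w"
  unfolding gclass_def using gR_refl by simp

lemma RP_lift:
  assumes C: "C \<in> RP" and c: "c \<in> G"
  shows "\<exists>y\<in>hatH. gclass gR (Pset a) y = C \<and> a * y = c"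
proof -
  obtain w where w: "w \<in> Pset a" "C = gclass gR (Pset a) w" "C \<subseteq> hatclass gR a x" using C by blast
  have "w \<in> hatclass gR a x" using w class_self by blast
  then have "gR (aSa a) (a * x) (a * w)" unfolding hatR_mem by blast
  then have "gR (aSa a) (a * w) c" using G_R[OF c] gR_sym gR_Mt by blast
  then obtain u v where uv: "u \<in> aSa a" "a * w = c * v" "v \<in> aSa a" "c = a * w * u" unfolding gR_M by blast
  have L: "w * u \<in> Pset a \<and> gR (Pset a) (w * u) w \<and> a * (w * u) = a * w * u"
    using Lift[OF w(1) uv(1) uv(3) uv(2)[unfolded uv(4)]] .
  have e: "a * (w * u) = c" using L uv(4) by simp
  have "w * u \<in> hatH" unfolding hatH_mem using L e c by simp
  moreover have "gclass gR (Pset a) (w * u) = C" using class_eq L w(2) by simp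
  ultimately show ?thesis using e by blast
qed

lemma hatH_R: "y \<in> hatH \<Longrightarrow> z \<in> hatH \<Longrightarrow> is_group G \<Longrightarrow> y * z \<in> hatH \<and> gR (Pset a) (y * z) y"
proof -
  assume y: "y \<in> hatH" and z: "z \<in> hatH" and GG: "is_group G"
  have yP: "y \<in> Pset a" and ay: "a * y \<in> G" and az: "a * z \<in> G" and zP: "z \<in> Pset a"
    using y z unfolding hatH_mem by auto
  obtain v where v: "v \<in> G" "a * y = (a * y * (a * z)) * v" using grp_rinv[OF GG ay az] by blast
  have L: "y * (a * z) \<in> Pset a \<and> gR (Pset a) (y * (a * z)) y \<and> a * (y * (a * z)) = a * y * (a * z)"
    using Lift[OF yP G_M[OF az] G_M[OF v(1)] v(2)] .
  have "y * (a * z) = (y * a) * z" by (simp add: mult.assoc)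
  then have yz: "y * (a * z) = y * z" using P_right[OF yP] by simp
  have "a * y * (a * z) \<in> G" using grp_closed[OF GG ay az] .
  then show ?thesis using L yz unfolding hatH_mem by simp
qed

lemma part_iii:
  assumes GH: "is_group H0"
  shows "left_group_over hatH RP H0"
proof -
  have GG: "is_group G" using GH part_ii by blast
  define f where "f y = (gclass gR (Pset a) y, psi (a * y))" for y
  have cl: "\<forall>y\<in>hatH. \<forall>z\<in>hatH. y * z \<in> hatH" using hatH_R GG by blast
  have inj: "inj_on f hatH"
  proof (rule inj_onI)
    fix y z assume y: "y \<in> hatH" and z: "z \<in> hatH" and e: "f y = f z"
    have yP: "y \<in> Pset a" and ay: "a * y \<in> G" and az: "a * z \<in> G" and zP: "z \<in> Pset a"
      using y z unfolding hatH_mem by auto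
    have "z \<in> gclass gR (Pset a) y" using e class_self[OF zP] unfolding f_def by simp
    then obtain v where v: "z = y * v" unfolding gclass_def gR_P by blast
    have "psi (a * y) = psi (a * z)" using e unfolding f_def by simp
    then have "a * psi (a * y) = a * psi (a * z)" by simp
    then have "a * y = a * z" using phi_psi[OF ay] phi_psi[OF az] by simp
    then show "y = z" using Inj yP v by blast
  qed
  have img: "f ` hatH = RP \<times> H0"
  proof
    show "f ` hatH \<subseteq> RP \<times> H0"
    proof
      fix p assume "p \<in> f ` hatH"
      then obtain y where y: "y \<in> hatH" "p = f y" by blast
      have yP: "y \<in> Pset a" and ay: "a * y \<in> G" using y unfolding hatH_mem by auto
      show "p \<in> RP \<times> H0" using RP_in[OF yP G_R[OF ay]] psi_in[OF ay] y(2) unfolding f_def by simp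
    qed
  next
    show "RP \<times> H0 \<subseteq> f ` hatH"
    proof
      fix p assume "p \<in> RP \<times> H0"
      then obtain C h where p: "p = (C, h)" "C \<in> RP" "h \<in> H0" by blast
      obtain y where y: "y \<in> hatH" "gclass gR (Pset a) y = C" "a * y = a * h"
        using RP_lift[OF p(2) phi_into[OF p(3)]] by blast
      have "f y = p" using y p psi_phi[OF p(3)] unfolding f_def by simp
      then show "p \<in> f ` hatH" using y(1) by blast
    qed
  qed
  have hm: "\<forall>y\<in>hatH. \<forall>z\<in>hatH. f (y * z) = (fst (f y), snd (f y) * snd (f z))"
  proof (intro ballI)
    fix y z assume y: "y \<in> hatH" and z: "z \<in> hatH"
    have yP: "y \<in> Pset a" and ay: "a * y \<in> G" and az: "a * z \<in> G"
      using y z unfolding hatH_mem by auto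
    have R: "gR (Pset a) (y * z) y" using hatH_R[OF y z GG] by blast
    have "psi (a * (y * z)) = psi (a * y) * psi (a * z)"
      using hom[OF yP] psi_hom[OF GH ay az] by simp
    then show "f (y * z) = (fst (f y), snd (f y) * snd (f z))"
      using class_eq[OF R] unfolding f_def by simp
  qed
  have "bij_betw f hatH (RP \<times> H0)" unfolding bij_betw_def using inj img by blast
  then show ?thesis unfolding left_group_over_def
    using GH cl hm by (intro conjI exI[of _ f]) blast+
qed

lemma part_iv:
  assumes GH: "is_group H0"
  shows "left_zero_band {e \<in> hatH. e * e = e} \<and> {e \<in> hatH. e * e = e} \<approx> RP"
proof -
  have GG: "is_group G" using GH part_ii by blast
  let ?E = "{e \<in> hatH. e * e = e}"
  have Lrel: "gL (Pset a) e f" if e: "e \<in> hatH" and f: "f \<in> hatH" for e f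
  proof -
    have h: "e \<in> Pset a" "f \<in> Pset a" "gH (aSa a) (a * x) (a * e)" "gH (aSa a) (a * x) (a * f)"
      using e f unfolding hatH_mem G_mem by auto
    have "gL (aSa a) (a * x) (a * e)" "gL (aSa a) (a * x) (a * f)" using h(3,4) unfolding gH_def by auto
    then have "gL (aSa a) (a * e) (a * f)" using gL_Mt[OF gL_sym] by blast
    then show ?thesis using L_char \<open>e \<in> Pset a\<close> \<open>f \<in> Pset a\<close> by blast
  qed
  have lz: "e * f = e" if e: "e \<in> ?E" and f: "f \<in> ?E" for e f
  proof -
    have "gL (Pset a) e f" using Lrel e f by blast
    then obtain u where u: "e = u * f" unfolding gL_P by blast
    have ff: "f * f = f" using f by blast
    have "e * f = u * (f * f)" using u by (simp add: mult.assoc)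
    also have "\<dots> = u * f" using ff by simp
    finally show ?thesis using u by simp
  qed
  have "bij_betw (gclass gR (Pset a)) ?E RP"
    unfolding bij_betw_def
  proof (intro conjI)
    show "inj_on (gclass gR (Pset a)) ?E"
    proof (rule inj_onI)
      fix e f assume e: "e \<in> ?E" and f: "f \<in> ?E" and c: "gclass gR (Pset a) e = gclass gR (Pset a) f"
      have fP: "f \<in> Pset a" using f unfolding hatH_mem by blast
      have "f \<in> gclass gR (Pset a) e" using c class_self[OF fP] by simp
      then have "gR (Pset a) e f" unfolding gclass_def by simp
      then have "\<exists>v\<in>Pset a. f = e * v" unfolding gR_P by blast
      then obtain v where v: "f = e * v" by blast
      have ee: "e * e = e" using e by blast
      have "e * f = (e * e) * v" using v by (simp add: mult.assoc)
      also have "\<dots> = f" using ee v by simp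
      finally have "e * f = f" .
      moreover have "e * f = e" using lz[OF e f] .
      ultimately show "e = f" by metis
    qed
  next
    show "gclass gR (Pset a) ` ?E = RP"
    proof
      show "gclass gR (Pset a) ` ?E \<subseteq> RP"
      proof
        fix C assume "C \<in> gclass gR (Pset a) ` ?E"
        then obtain e where e: "e \<in> ?E" "C = gclass gR (Pset a) e" by blast
        have "e \<in> Pset a" "a * e \<in> G" using e unfolding hatH_mem by auto
        then show "C \<in> RP" using RP_in G_R e(2) by blast
      qed
    next
      show "RP \<subseteq> gclass gR (Pset a) ` ?E"
      proof
        fix C assume C: "C \<in> RP"
        obtain e' where e': "e' \<in> G" "e' * e' = e'" using grp_unit[OF GG] by blast
        obtain y where y: "y \<in> hatH" "gclass gR (Pset a) y = C" "a * y = e'"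
          using RP_lift[OF C e'(1)] by blast
        have yP: "y \<in> Pset a" using y unfolding hatH_mem by blast
        obtain t where t: "y = t * (a * y)" using P_t[OF yP] by blast
        have ty: "y = t * e'" using t[unfolded y(3)] .
        have "y * y = (y * a) * y" using P_right[OF yP] by simp
        also have "\<dots> = y * (a * y)" by (simp add: mult.assoc)
        also have "\<dots> = y * e'" using y(3) by simp
        also have "\<dots> = t * (e' * e')" using ty by (simp add: mult.assoc)
        also have "\<dots> = y" using e'(2) ty by simp
        finally have "y * y = y" .
        then show "C \<in> gclass gR (Pset a) ` ?E" using y by blast
      qed
    qed
  qed
  then have "?E \<approx> RP" unfolding eqpoll_def by blast
  moreover have "left_zero_band ?E" unfolding left_zero_band_def using lz by blast
  ultimately show ?thesis by blast
qed

end

theorem theorem3p21: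
  fixes a x :: "'a::semigroup_mult"
  assumes idem: "a * a = a"
    and reg: "aSa a \<subseteq> Reg"
    and xP: "x \<in> Pset a"
  defines "RPcls \<equiv> {C. (\<exists>y\<in>Pset a. C = gclass gR (Pset a) y) \<and> C \<subseteq> hatclass gR a x}"
  shows "bij_betw (\<lambda>y. a * y) (gclass gH (Pset a) x) (gclass gH (aSa a) (a * x)) \<and>
         (is_group (gclass gH (Pset a) x) \<longleftrightarrow> is_group (gclass gH (aSa a) (a * x))) \<and>
         (is_group (gclass gH (Pset a) x) \<longrightarrow> sg_iso (gclass gH (Pset a) x) (gclass gH (aSa a) (a * x))) \<and>
         (is_group (gclass gH (Pset a) x) \<longrightarrow>
           (\<exists>U :: 'a set set. U \<approx> RPcls \<and> left_group_over (hatclass gH a x) U (gclass gH (Pset a) x))) \<and>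
         (is_group (gclass gH (Pset a) x) \<longrightarrow>
           left_zero_band {e \<in> hatclass gH a x. e * e = e} \<and> {e \<in> hatclass gH a x. e * e = e} \<approx> RPcls)"
proof -
  interpret ctx2 a x by (intro ctx2.intro ctx.intro ctx2_axioms.intro idem reg xP)
  have 1: "bij_betw (\<lambda>y. a * y) H0 G" by (rule phi_bij)
  have 2: "sg_iso H0 G" unfolding sg_iso_def using phi_bij phi_hom by blast
  have 3: "is_group H0 \<longrightarrow> (\<exists>U :: 'a set set. U \<approx> RP \<and> left_group_over hatH U H0)"
    using part_iii eqpoll_refl by blast
  show ?thesis unfolding RPcls_def using 1 2 3 part_ii part_iv by blast
qed

end
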